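(* Let $\mathcal{H}$ be a real Hilbert space and $\mathsf{T}:\mathcal{H}\to2^{\mathcal{H}}$ a set-valued operator. The following are equivalent: (1) $\mathsf{T}=\partial\psi$ for some $\psi\in\Gamma_0(\mathcal{H})$; (2) $\mathsf{T}=\mathbf{Prox}_{\phi}$ for some $\phi:\mathcal{H}\to(-\infty,+\infty]$ with $\phi+\tfrac12\|\cdot\|^2\in\Gamma_0(\mathcal{H})$. Moreover, if these statements hold, then $\phi=\psi^*-\tfrac12\|\cdot\|^2$ (equivalently, $\psi=(\phi+\tfrac12\|\cdot\|^2)^*$).
   Context: $\Gamma_0(\mathcal{H})$ is the set of proper lower semicontinuous convex functions $\mathcal{H}\to(-\infty,+\infty]$. $\partial$ denotes the subdifferential $\partial g(x)=\{z:\langle y-x,z\rangle+g(x)\le g(y)\ \forall y\}$; $\psi^*$ is the Fenchel conjugate $\psi^*(u)=\sup_x(\langle x,u\rangle-\psi(x))$. For proper $\phi$, $\mathbf{Prox}_{\phi}(x)=\operatorname{argmin}_{y}\big(\phi(y)+\frac12\|x-y\|^2\big)$ (set-valued). *)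

theory Defs
  imports "HOL-Analysis.Analysis"
begin

definition proper_fun :: "('a \<Rightarrow> ereal) \<Rightarrow> bool" where
  "proper_fun f \<longleftrightarrow> (\<forall>x. f x \<noteq> -\<infinity>) \<and> (\<exists>x. f x \<noteq> \<infinity>)"

definition lsc_fun :: "('a::topological_space \<Rightarrow> ereal) \<Rightarrow> bool" where
  "lsc_fun f \<longleftrightarrow> (\<forall>c::ereal. closed {x. f x \<le> c})"

definition convex_fun :: "('a::real_vector \<Rightarrow> ereal) \<Rightarrow> bool" where
  "convex_fun f \<longleftrightarrow> (\<forall>x y t. 0 < t \<and> t < 1 \<longrightarrow>
      f (t *\<^sub>R x + (1 - t) *\<^sub>R y) \<le> ereal t * f x + ereal (1 - t) * f y)"

definition Gamma0 :: "('a::real_inner \<Rightarrow> ereal) \<Rightarrow> bool" where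
  "Gamma0 f \<longleftrightarrow> proper_fun f \<and> lsc_fun f \<and> convex_fun f"

definition subdiff :: "('a::real_inner \<Rightarrow> ereal) \<Rightarrow> 'a \<Rightarrow> 'a set" where
  "subdiff g x = {z. \<forall>y. ereal (inner (y - x) z) + g x \<le> g y}"

definition fconj :: "('a::real_inner \<Rightarrow> ereal) \<Rightarrow> 'a \<Rightarrow> ereal" where
  "fconj \<psi> u = (SUP x. ereal (inner x u) - \<psi> x)"

definition hsq :: "'a::real_normed_vector \<Rightarrow> ereal" where
  "hsq x = ereal (norm x ^ 2 / 2)"

definition Prox :: "('a::real_normed_vector \<Rightarrow> ereal) \<Rightarrow> 'a \<Rightarrow> 'a set" where
  "Prox \<phi> x = {y. \<forall>w. \<phi> y + hsq (x - y) \<le> \<phi> w + hsq (x - w)}"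

end

theory Submission
  imports Defs "HOL-Analysis.Analysis"
begin

lemma parallelogram_real_inner:
  fixes a b :: "'b::real_inner"
  shows "norm (a + b)^2 + norm (a - b)^2 = 2 * norm a ^2 + 2 * norm b ^2"
  by (simp add: power2_norm_eq_inner inner_add_left inner_add_right inner_diff_left inner_diff_right inner_commute)

lemma hilbert_closest:
  fixes S :: "'b::{real_inner,complete_space} set"
  assumes cl: "closed S" and cv: "convex S" and ne: "S \<noteq> {}"
  shows "\<exists>p\<in>S. \<forall>x\<in>S. norm (z - p) \<le> norm (z - x)"
proof -
  define d where "d = (INF x\<in>S. norm (z - x))"
  have bdd: "bdd_below ((\<lambda>x. norm (z - x)) ` S)" by (rule bdd_belowI[of _ 0]) auto
  have dle: "d \<le> norm (z - x)" if "x \<in> S" for x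
    unfolding d_def using bdd that by (simp add: cInf_lower)
  have d0: "0 \<le> d" unfolding d_def using ne by (simp add: le_cINF_iff bdd)
  have ex: "\<exists>x\<in>S. norm (z - x)^2 < d^2 + 1 / (Suc n)" for n
  proof -
    have "d < sqrt (d^2 + 1 / Suc n)"
      by (intro real_less_rsqrt) simp
    then obtain x where "x \<in> S" "norm (z - x) < sqrt (d^2 + 1 / Suc n)"
      unfolding d_def using ne bdd by (meson cINF_less_iff)
    moreover then have "norm (z - x)^2 < d^2 + 1 / Suc n"
      using power_strict_mono[of "norm (z - x)" "sqrt (d^2 + 1 / Suc n)" 2] by simp
    ultimately show ?thesis by blast
  qed
  then obtain X where XS: "\<And>n. X n \<in> S" and Xd: "\<And>n. norm (z - X n)^2 < d^2 + 1 / Suc n"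
    by metis
  have key: "norm (X m - X n)^2 \<le> 2 * (1 / Suc m) + 2 * (1 / Suc n)" for m n
  proof -
    have mid: "(1/2) *\<^sub>R X m + (1/2) *\<^sub>R X n \<in> S"
      using cv XS unfolding convex_def by simp
    have "d \<le> norm (z - ((1/2) *\<^sub>R X m + (1/2) *\<^sub>R X n))" using dle mid by blast
    hence "d^2 \<le> norm (z - ((1/2) *\<^sub>R X m + (1/2) *\<^sub>R X n))^2" using d0 by (simp add: power_mono)
    moreover have "(z - X m) + (z - X n) = 2 *\<^sub>R (z - ((1/2) *\<^sub>R X m + (1/2) *\<^sub>R X n))"
      by (simp add: algebra_simps scaleR_2)
    hence "norm ((z - X m) + (z - X n))^2 = 4 * norm (z - ((1/2) *\<^sub>R X m + (1/2) *\<^sub>R X n))^2"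
      by (simp add: power_mult_distrib)
    moreover have "(z - X m) - (z - X n) = X n - X m" by simp
    ultimately have "norm (X n - X m)^2 + 4 * norm (z - ((1/2) *\<^sub>R X m + (1/2) *\<^sub>R X n))^2
        = 2 * norm (z - X m)^2 + 2 * norm (z - X n)^2"
      using parallelogram_real_inner[of "z - X m" "z - X n"] by simp
    moreover have "norm (X m - X n)^2 = norm (X n - X m)^2" by (simp add: norm_minus_commute)
    ultimately show ?thesis using Xd[of m] Xd[of n] \<open>d^2 \<le> _\<close> by linarith
  qed
  have "Cauchy X"
  proof (rule CauchyI)
    fix e :: real assume e: "0 < e"
    obtain M :: nat where M: "4 / e^2 < M" using reals_Archimedean2 by blast
    show "\<exists>M. \<forall>m\<ge>M. \<forall>n\<ge>M. norm (X m - X n) < e"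
    proof (intro exI allI impI)
      fix m n assume mn: "M \<le> m" "M \<le> n"
      have "1 / Suc m \<le> 1 / Suc M" "1 / Suc n \<le> 1 / Suc M" using mn by (simp_all add: frac_le)
      moreover have "4 / Suc M < e^2" using M e
        by (smt (verit, ccfv_SIG) divide_less_eq of_nat_Suc of_nat_0_le_iff zero_less_power mult.commute)
      ultimately have "norm (X m - X n)^2 < e^2" using key[of m n] by linarith
      thus "norm (X m - X n) < e" using e by (meson power_less_imp_less_base less_imp_le)
    qed
  qed
  then obtain p where Xp: "X \<longlonglongrightarrow> p" using Cauchy_convergent_iff convergent_def by blast
  have pS: "p \<in> S" using cl XS Xp closed_sequentially by blast
  have lim1: "(\<lambda>n. norm (z - X n)^2) \<longlonglongrightarrow> norm (z - p)^2"
    by (intro tendsto_intros Xp)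
  have lim2: "(\<lambda>n. d^2 + 1 / Suc n) \<longlonglongrightarrow> d^2"
    using tendsto_add[OF tendsto_const LIMSEQ_inverse_real_of_nat, of "d^2"]
    by (simp add: inverse_eq_divide)
  have "norm (z - p)^2 \<le> d^2"
  proof (rule tendsto_le[OF sequentially_bot lim2 lim1])
    show "\<forall>\<^sub>F n in sequentially. norm (z - X n)^2 \<le> d^2 + 1 / Suc n"
      by (rule always_eventually, rule allI, rule less_imp_le, rule Xd)
  qed
  hence pd: "norm (z - p) \<le> d" using d0 by (rule power2_le_imp_le)
  show ?thesis
  proof (intro bexI[OF _ pS] ballI)
    fix x assume "x \<in> S"
    thus "norm (z - p) \<le> norm (z - x)" using dle[of x] pd by linarith
  qed
qed

lemma norm_diff_scale_sq:
  fixes u v :: "'b::real_inner"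
  shows "norm (u - t *\<^sub>R v)^2 = norm u^2 - 2 * t * inner u v + t^2 * norm v^2"
  unfolding power2_norm_eq_inner by (simp add: inner_diff_left inner_diff_right inner_commute algebra_simps power2_eq_square)

lemma proj_ineq:
  fixes S :: "'b::real_inner set"
  assumes cv: "convex S" and pS: "p \<in> S" and mn: "\<forall>x\<in>S. norm (z - p) \<le> norm (z - x)"
    and xS: "x \<in> S"
  shows "inner (z - p) (x - p) \<le> 0"
proof (rule ccontr)
  assume "\<not> ?thesis"
  hence g: "0 < inner (z - p) (x - p)" by simp
  define g where "g = inner (z - p) (x - p)"
  define a where "a = norm (x - p)^2"
  have "x \<noteq> p" using g by auto
  hence a: "0 < a" unfolding a_def by simp
  define t where "t = min 1 (g / a)"
  have t0: "0 < t" unfolding t_def using a g g_def by simp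
  have t1: "t \<le> 1" unfolding t_def by simp
  have tg: "t * a \<le> g" unfolding t_def using a
    by (metis min.cobounded2 le_divide_eq mult.commute)
  have qS: "(1 - t) *\<^sub>R p + t *\<^sub>R x \<in> S"
    using cv pS xS t0 t1 unfolding convex_def by simp
  have e: "z - ((1 - t) *\<^sub>R p + t *\<^sub>R x) = (z - p) - t *\<^sub>R (x - p)"
    by (simp add: algebra_simps)
  have "norm (z - ((1 - t) *\<^sub>R p + t *\<^sub>R x))^2 = norm (z - p)^2 - 2 * t * g + t^2 * a"
    unfolding g_def a_def e by (rule norm_diff_scale_sq)
  moreover have "norm (z - p)^2 \<le> norm (z - ((1 - t) *\<^sub>R p + t *\<^sub>R x))^2"
    using mn qS by (simp add: power_mono)
  ultimately have "t * (2 * g) \<le> t * (t * a)" by (simp add: power2_eq_square algebra_simps)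
  hence "2 * g \<le> t * a" using t0 by simp
  thus False using tg g g_def by linarith
qed

lemma Gamma0_finite_cases:
  assumes "Gamma0 f"
  obtains (inf) "f x = \<infinity>" | (fin) r where "f x = ereal r"
  using assms unfolding Gamma0_def proper_fun_def by (cases "f x") auto

lemma Gamma0_dom:
  assumes "Gamma0 f"
  obtains x1 k where "f x1 = ereal k"
  using assms unfolding Gamma0_def proper_fun_def by (metis ereal_cases)

lemma epi_convex:
  fixes f :: "'a::real_inner \<Rightarrow> ereal"
  assumes "Gamma0 f"
  shows "convex {q. f (fst q) \<le> ereal (snd q)}"
  unfolding convex_def
proof (intro ballI allI impI)
  fix q1 q2 :: "'a \<times> real" and u v :: real
  assume q1: "q1 \<in> {q. f (fst q) \<le> ereal (snd q)}" and q2: "q2 \<in> {q. f (fst q) \<le> ereal (snd q)}"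
    and u: "0 \<le> u" and v: "0 \<le> v" and uv: "u + v = 1"
  obtain x1 r1 where [simp]: "q1 = (x1, r1)" by fastforce
  obtain x2 r2 where [simp]: "q2 = (x2, r2)" by fastforce
  have h1: "f x1 \<le> ereal r1" and h2: "f x2 \<le> ereal r2" using q1 q2 by auto
  have "f (u *\<^sub>R x1 + v *\<^sub>R x2) \<le> ereal (u * r1 + v * r2)"
  proof (cases "u = 0")
    case True
    hence "v = 1" using uv by simp
    thus ?thesis using True h2 by simp
  next
    case False
    show ?thesis
    proof (cases "v = 0")
      case True
      hence "u = 1" using uv by simp
      thus ?thesis using True h1 by simp
    next
      case vF: False
      have ut: "0 < u" "u < 1" using u v uv False vF by auto
      have v1: "v = 1 - u" using uv by simp
      have "f (u *\<^sub>R x1 + (1 - u) *\<^sub>R x2) \<le> ereal u * f x1 + ereal (1 - u) * f x2"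
        using assms ut unfolding Gamma0_def convex_fun_def by blast
      also have "\<dots> \<le> ereal u * ereal r1 + ereal (1 - u) * ereal r2"
        using h1 h2 ut by (intro add_mono ereal_mult_left_mono) auto
      also have "\<dots> = ereal (u * r1 + (1 - u) * r2)" by simp
      finally show ?thesis using v1 by simp
    qed
  qed
  thus "u *\<^sub>R q1 + v *\<^sub>R q2 \<in> {q. f (fst q) \<le> ereal (snd q)}" by simp
qed

lemma epi_closed:
  fixes f :: "'a::real_inner \<Rightarrow> ereal"
  assumes "Gamma0 f"
  shows "closed {q. f (fst q) \<le> ereal (snd q)}"
  unfolding closed_sequential_limits
proof (intro allI impI)
  fix Q and l :: "'a \<times> real"
  assume h: "(\<forall>n. Q n \<in> {q. f (fst q) \<le> ereal (snd q)}) \<and> Q \<longlonglongrightarrow> l"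
  have Qf: "\<And>n. f (fst (Q n)) \<le> ereal (snd (Q n))" using h by auto
  have l1: "(\<lambda>n. fst (Q n)) \<longlonglongrightarrow> fst l" using h by (intro tendsto_fst) auto
  have l2: "(\<lambda>n. snd (Q n)) \<longlonglongrightarrow> snd l" using h by (intro tendsto_snd) auto
  have "f (fst l) \<le> ereal (snd l)"
  proof (rule ereal_le_epsilon2)
    fix e :: real assume e: "0 < e"
    have ev: "eventually (\<lambda>n. snd (Q n) < snd l + e) sequentially"
      using order_tendstoD(2)[OF l2, of "snd l + e"] e by simp
    have cl: "closed {x. f x \<le> ereal (snd l + e)}"
      using assms unfolding Gamma0_def lsc_fun_def by blast
    have "eventually (\<lambda>n. fst (Q n) \<in> {x. f x \<le> ereal (snd l + e)}) sequentially"
    proof (rule eventually_mono[OF ev])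
      fix n assume "snd (Q n) < snd l + e"
      hence "f (fst (Q n)) \<le> ereal (snd l + e)" using Qf[of n]
        by (meson ereal_less_eq(3) less_imp_le order_trans)
      thus "fst (Q n) \<in> {x. f x \<le> ereal (snd l + e)}" by simp
    qed
    hence "fst l \<in> {x. f x \<le> ereal (snd l + e)}"
      using Lim_in_closed_set[OF cl _ sequentially_bot l1] by blast
    thus "f (fst l) \<le> ereal (snd l) + ereal e" by simp
  qed
  thus "l \<in> {q. f (fst q) \<le> ereal (snd q)}" by simp
qed

lemma sep_core:
  fixes f :: "'a::{real_inner,complete_space} \<Rightarrow> ereal"
  assumes G: "Gamma0 f" and ax: "ereal \<alpha> < f x0"
  shows "(\<exists>u \<beta>. (\<forall>x. ereal (inner x u - \<beta>) \<le> f x) \<and> \<alpha> < inner x0 u - \<beta>) \<or>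
         (\<exists>v y. (\<forall>x. f x \<noteq> \<infinity> \<longrightarrow> inner v (x - y) \<le> 0) \<and> 0 < inner v (x0 - y))"
proof -
  define E where "E = {q::'a \<times> real. f (fst q) \<le> ereal (snd q)}"
  have cvE: "convex E" unfolding E_def by (rule epi_convex[OF G])
  have clE: "closed E" unfolding E_def by (rule epi_closed[OF G])
  obtain x1 k where "f x1 = ereal k" using Gamma0_dom[OF G] by blast
  hence "(x1, k) \<in> E" unfolding E_def by simp
  hence neE: "E \<noteq> {}" by blast
  obtain p where pE: "p \<in> E" and mn: "\<forall>q\<in>E. norm ((x0, \<alpha>) - p) \<le> norm ((x0, \<alpha>) - q)"
    using hilbert_closest[OF clE cvE neE] by blast
  obtain y s where p: "p = (y, s)" by fastforce
  have fys: "f y \<le> ereal s" using pE p unfolding E_def by simp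
  have VI: "inner (x0 - y) (x - y) + (\<alpha> - s) * (r - s) \<le> 0" if "f x \<le> ereal r" for x r
    using proj_ineq[OF cvE pE mn, of "(x, r)"] that p unfolding E_def by simp
  have "(y, s + 1) \<in> E" using fys unfolding E_def by (simp add: order_trans)
  have "\<alpha> - s \<le> 0" using VI[of y "s + 1"] fys by (simp add: order_trans)
  have zE: "(x0, \<alpha>) \<notin> E" using ax unfolding E_def by simp
  hence "(x0, \<alpha>) \<noteq> (y, s)" using pE p by auto
  show ?thesis
  proof (cases "\<alpha> - s < 0")
    case True
    define c where "c = - 1 / (\<alpha> - s)"
    have c0: "0 < c" unfolding c_def using True by simp
    have ne0: "\<alpha> - s \<noteq> 0" using True by simp
    have cd: "c * (- (\<alpha> - s)) = 1" unfolding c_def using ne0 by (simp add: field_simps)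
    define u where "u = c *\<^sub>R (x0 - y)"
    define \<beta> where "\<beta> = inner y u - s"
    have aff: "inner x u - \<beta> = c * inner (x0 - y) (x - y) + s" for x
      unfolding u_def \<beta>_def by (simp add: inner_diff_left inner_diff_right inner_commute algebra_simps)
    have "ereal (inner x u - \<beta>) \<le> f x" for x
    proof (cases "f x = \<infinity>")
      case True thus ?thesis by simp
    next
      case False
      then obtain r where fin: "f x = ereal r" using Gamma0_finite_cases[OF G, of x] by blast
      have "inner (x0 - y) (x - y) \<le> - (\<alpha> - s) * (r - s)" using VI[of x r] fin by (simp add: algebra_simps)
      hence "c * inner (x0 - y) (x - y) \<le> c * (- (\<alpha> - s) * (r - s))"
        using c0 by (simp add: mult_left_mono)
      also have "\<dots> = r - s" using cd by (simp add: mult.assoc[symmetric])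
      finally show ?thesis using fin aff[of x] by simp
    qed
    moreover have "\<alpha> < inner x0 u - \<beta>"
    proof -
      have "0 \<le> c * inner (x0 - y) (x0 - y)" using c0 by simp
      thus ?thesis using aff[of x0] True by simp
    qed
    ultimately show ?thesis by blast
  next
    case False
    hence d0: "\<alpha> = s" using \<open>\<alpha> - s \<le> 0\<close> by simp
    hence "x0 \<noteq> y" using \<open>(x0, \<alpha>) \<noteq> (y, s)\<close> by simp
    hence "0 < inner (x0 - y) (x0 - y)" by simp
    moreover have "\<forall>x. f x \<noteq> \<infinity> \<longrightarrow> inner (x0 - y) (x - y) \<le> 0"
    proof (intro allI impI)
      fix x assume "f x \<noteq> \<infinity>"
      then obtain r where "f x = ereal r" using Gamma0_finite_cases[OF G, of x] by blast
      thus "inner (x0 - y) (x - y) \<le> 0" using VI[of x r] d0 by simp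
    qed
    ultimately show ?thesis by blast
  qed
qed

lemma affine_minorant:
  fixes f :: "'a::{real_inner,complete_space} \<Rightarrow> ereal"
  assumes G: "Gamma0 f" and ax: "ereal \<alpha> < f x0"
  shows "\<exists>u \<beta>. (\<forall>x. ereal (inner x u - \<beta>) \<le> f x) \<and> \<alpha> < inner x0 u - \<beta>"
proof -
  obtain x1 k where k: "f x1 = ereal k" using Gamma0_dom[OF G] by blast
  have "ereal (k - 1) < f x1" using k by simp
  have "\<exists>u0 \<beta>0. \<forall>x. ereal (inner x u0 - \<beta>0) \<le> f x"
  proof -
    from sep_core[OF G \<open>ereal (k - 1) < f x1\<close>] show ?thesis
    proof
      assume "\<exists>v y. (\<forall>x. f x \<noteq> \<infinity> \<longrightarrow> inner v (x - y) \<le> 0) \<and> 0 < inner v (x1 - y)"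
      then obtain v y where vy: "\<forall>x. f x \<noteq> \<infinity> \<longrightarrow> inner v (x - y) \<le> 0" and "0 < inner v (x1 - y)" by blast
      moreover have "inner v (x1 - y) \<le> 0" using vy[rule_format, of x1] k by simp
      ultimately have False by simp
      thus ?thesis ..
    qed blast
  qed
  then obtain u0 \<beta>0 where m0: "\<forall>x. ereal (inner x u0 - \<beta>0) \<le> f x" by blast
  from sep_core[OF G ax] show ?thesis
  proof
    assume "\<exists>v y. (\<forall>x. f x \<noteq> \<infinity> \<longrightarrow> inner v (x - y) \<le> 0) \<and> 0 < inner v (x0 - y)"
    then obtain v y where vy: "\<forall>x. f x \<noteq> \<infinity> \<longrightarrow> inner v (x - y) \<le> 0" and g: "0 < inner v (x0 - y)"
      by blast
    define g where "g = inner v (x0 - y)"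
    define a0 where "a0 = inner x0 u0 - \<beta>0"
    define c where "c = max 0 ((\<alpha> - a0) / g + 1)"
    define u where "u = u0 + c *\<^sub>R v"
    define \<beta> where "\<beta> = \<beta>0 + c * inner v y"
    have aff: "inner x u - \<beta> = (inner x u0 - \<beta>0) + c * inner v (x - y)" for x
      unfolding u_def \<beta>_def by (simp add: inner_diff_left inner_diff_right inner_add_right inner_commute algebra_simps)
    have c0: "0 \<le> c" unfolding c_def by simp
    have "ereal (inner x u - \<beta>) \<le> f x" for x
    proof (cases "f x = \<infinity>")
      case True thus ?thesis by simp
    next
      case False
      hence "c * inner v (x - y) \<le> 0" using vy c0 by (simp add: mult_nonneg_nonpos)
      hence "ereal (inner x u - \<beta>) \<le> ereal (inner x u0 - \<beta>0)" using aff[of x] by simp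
      thus ?thesis using m0 order_trans by blast
    qed
    moreover have "\<alpha> < inner x0 u - \<beta>"
    proof -
      have gp: "0 < g" using g g_def by simp
      have "((\<alpha> - a0) / g + 1) * g \<le> c * g" unfolding c_def using gp by (intro mult_right_mono) auto
      moreover have "((\<alpha> - a0) / g + 1) * g = \<alpha> - a0 + g" using gp by (simp add: field_simps)
      ultimately have "\<alpha> - a0 + g \<le> c * g" by simp
      thus ?thesis using aff[of x0] gp unfolding a0_def g_def by simp
    qed
    ultimately show ?thesis by blast
  qed
qed

lemma fconj_ge: "ereal (inner x u) - f x \<le> fconj f u"
  unfolding fconj_def by (rule SUP_upper) simp

lemma fconj_le: "(\<And>x. ereal (inner x u) - f x \<le> c) \<Longrightarrow> fconj f u \<le> c"
  unfolding fconj_def by (rule SUP_least)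

lemma fconj_not_minf:
  assumes G: "Gamma0 f" shows "fconj f u \<noteq> -\<infinity>"
proof -
  obtain x1 k where k: "f x1 = ereal k" using Gamma0_dom[OF G] by blast
  have "ereal (inner x1 u - k) \<le> fconj f u" using fconj_ge[of x1 u f] k by simp
  thus ?thesis by auto
qed

lemma minorant_fconj:
  assumes "\<forall>x. ereal (inner x u - \<beta>) \<le> f x"
  shows "fconj f u \<le> ereal \<beta>"
proof (rule fconj_le)
  fix x
  have h: "ereal (inner x u - \<beta>) \<le> f x" using assms by blast
  show "ereal (inner x u) - f x \<le> ereal \<beta>"
  proof (cases "f x")
    case (real r) thus ?thesis using h by simp
  next
    case PInf thus ?thesis by simp
  next
    case MInf thus ?thesis using h by simp
  qed
qed

lemma Gamma0_fconj:
  fixes f :: "'a::{real_inner,complete_space} \<Rightarrow> ereal"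
  assumes G: "Gamma0 f"
  shows "Gamma0 (fconj f)"
  unfolding Gamma0_def
proof (intro conjI)
  show "proper_fun (fconj f)"
    unfolding proper_fun_def
  proof (intro conjI allI)
    fix u show "fconj f u \<noteq> -\<infinity>" by (rule fconj_not_minf[OF G])
  next
    obtain x1 k where k: "f x1 = ereal k" using Gamma0_dom[OF G] by blast
    hence "ereal (k - 1) < f x1" by simp
    then obtain u \<beta> where "\<forall>x. ereal (inner x u - \<beta>) \<le> f x"
      using affine_minorant[OF G] by blast
    hence "fconj f u \<le> ereal \<beta>" by (rule minorant_fconj)
    hence "fconj f u \<noteq> \<infinity>" by (cases "fconj f u") auto
    thus "\<exists>u. fconj f u \<noteq> \<infinity>" by blast
  qed
next
  show "lsc_fun (fconj f)"
    unfolding lsc_fun_def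
  proof
    fix c :: ereal
    have eq: "{u. fconj f u \<le> c} = (\<Inter>x. {u. ereal (inner x u) - f x \<le> c})"
    proof (rule set_eqI, rule iffI)
      fix u assume "u \<in> {u. fconj f u \<le> c}"
      thus "u \<in> (\<Inter>x. {u. ereal (inner x u) - f x \<le> c})"
        using order_trans[OF fconj_ge] by blast
    next
      fix u assume "u \<in> (\<Inter>x. {u. ereal (inner x u) - f x \<le> c})"
      thus "u \<in> {u. fconj f u \<le> c}" using fconj_le[of u f c] by simp
    qed
    have "closed {u. ereal (inner x u) - f x \<le> c}" for x
    proof (cases "f x")
      case PInf thus ?thesis by simp
    next
      case MInf thus ?thesis using G unfolding Gamma0_def proper_fun_def by simp
    next
      case (real r)
      show ?thesis
      proof (cases c)
        case (real d)
        have "{u. ereal (inner x u) - f x \<le> c} = {u. inner x u - r \<le> d}" using \<open>f x = ereal r\<close> real by simp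
        moreover have "closed {u. inner x u - r \<le> d}"
          by (intro closed_Collect_le continuous_intros)
        ultimately show ?thesis by simp
      next
        case PInf thus ?thesis by simp
      next
        case MInf thus ?thesis using \<open>f x = ereal r\<close> by simp
      qed
    qed
    thus "closed {u. fconj f u \<le> c}" unfolding eq by (intro closed_INT) auto
  qed
next
  show "convex_fun (fconj f)"
    unfolding convex_fun_def
  proof (intro allI impI)
    fix a b :: 'a and t :: real
    assume t: "0 < t \<and> t < 1"
    show "fconj f (t *\<^sub>R a + (1 - t) *\<^sub>R b) \<le> ereal t * fconj f a + ereal (1 - t) * fconj f b"
    proof (rule fconj_le)
      fix x
      show "ereal (inner x (t *\<^sub>R a + (1 - t) *\<^sub>R b)) - f x \<le> ereal t * fconj f a + ereal (1 - t) * fconj f b"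
      proof (cases "f x")
        case PInf thus ?thesis by simp
      next
        case MInf thus ?thesis using G unfolding Gamma0_def proper_fun_def by simp
      next
        case (real r)
        have "ereal (inner x (t *\<^sub>R a + (1 - t) *\<^sub>R b)) - f x
              = ereal t * ereal (inner x a - r) + ereal (1 - t) * ereal (inner x b - r)"
        proof -
          have "inner x (t *\<^sub>R a + (1 - t) *\<^sub>R b) - r = t * (inner x a - r) + (1 - t) * (inner x b - r)"
            by (simp add: inner_add_right algebra_simps)
          thus ?thesis using real by simp
        qed
        also have "\<dots> \<le> ereal t * fconj f a + ereal (1 - t) * fconj f b"
        proof (intro add_mono ereal_mult_left_mono)
          show "ereal (inner x a - r) \<le> fconj f a" using fconj_ge[of x a f] real by simp
          show "ereal (inner x b - r) \<le> fconj f b" using fconj_ge[of x b f] real by simp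
        qed (use t in auto)
        finally show ?thesis .
      qed
    qed
  qed
qed

lemma fconj_fconj:
  fixes f :: "'a::{real_inner,complete_space} \<Rightarrow> ereal"
  assumes G: "Gamma0 f"
  shows "fconj (fconj f) x = f x"
proof (rule antisym)
  show "fconj (fconj f) x \<le> f x"
  proof (rule fconj_le)
    fix u
    show "ereal (inner u x) - fconj f u \<le> f x"
    proof (cases "f x")
      case PInf thus ?thesis by simp
    next
      case MInf thus ?thesis using G unfolding Gamma0_def proper_fun_def by simp
    next
      case (real r)
      have ge: "ereal (inner x u - r) \<le> fconj f u" using fconj_ge[of x u f] real by simp
      show ?thesis
      proof (cases "fconj f u")
        case PInf thus ?thesis by simp
      next
        case MInf thus ?thesis using fconj_not_minf[OF G] by simp
      next
        case (real m)
        thus ?thesis using ge \<open>f x = ereal r\<close> by (simp add: inner_commute)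
      qed
    qed
  qed
next
  show "f x \<le> fconj (fconj f) x"
  proof (rule ccontr)
    assume "\<not> f x \<le> fconj (fconj f) x"
    hence "fconj (fconj f) x < f x" by simp
    then obtain \<alpha> where a1: "fconj (fconj f) x < ereal \<alpha>" and a2: "ereal \<alpha> < f x"
      using ereal_dense2 by blast
    obtain u \<beta> where m: "\<forall>y. ereal (inner y u - \<beta>) \<le> f y" and ab: "\<alpha> < inner x u - \<beta>"
      using affine_minorant[OF G a2] by blast
    have fb: "fconj f u \<le> ereal \<beta>" using m by (rule minorant_fconj)
    have "ereal (inner u x) - fconj f u \<le> fconj (fconj f) x" by (rule fconj_ge)
    moreover have "ereal (inner x u - \<beta>) \<le> ereal (inner u x) - fconj f u"
    proof (cases "fconj f u")
      case (real m) thus ?thesis using fb by (simp add: inner_commute)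
    next
      case PInf thus ?thesis using fb by simp
    next
      case MInf thus ?thesis using fconj_not_minf[OF G] by simp
    qed
    ultimately have "ereal (inner x u - \<beta>) < ereal \<alpha>" using a1 by (meson order_le_less_trans)
    thus False using ab by simp
  qed
qed

lemma argmax_subdiff:
  fixes f :: "'a::{real_inner,complete_space} \<Rightarrow> ereal"
  assumes G: "Gamma0 f"
  shows "{y. \<forall>w. ereal (inner w x) - f w \<le> ereal (inner y x) - f y} = subdiff (fconj f) x"
proof (rule set_eqI, rule iffI)
  fix y assume "y \<in> {y. \<forall>w. ereal (inner w x) - f w \<le> ereal (inner y x) - f y}"
  hence am: "\<And>w. ereal (inner w x) - f w \<le> ereal (inner y x) - f y" by blast
  obtain x1 k where k: "f x1 = ereal k" using Gamma0_dom[OF G] by blast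
  have "f y \<noteq> \<infinity>"
  proof
    assume "f y = \<infinity>"
    thus False using am[of x1] k by simp
  qed
  then obtain r where r: "f y = ereal r" using Gamma0_finite_cases[OF G, of y] by blast
  have fx: "fconj f x = ereal (inner y x - r)"
  proof (rule antisym)
    show "fconj f x \<le> ereal (inner y x - r)" using am r by (intro fconj_le) simp
    show "ereal (inner y x - r) \<le> fconj f x" using fconj_ge[of y x f] r by simp
  qed
  have "ereal (inner (v - x) y) + fconj f x \<le> fconj f v" for v
  proof -
    have "ereal (inner y v - r) \<le> fconj f v" using fconj_ge[of y v f] r by simp
    moreover have e: "inner (v - x) y + (inner y x - r) = inner y v - r"
      using inner_commute[of y x] inner_commute[of y v] by (simp add: inner_diff_left)
    have "ereal (inner (v - x) y) + fconj f x = ereal (inner y v - r)"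
      by (simp only: fx plus_ereal.simps(1) e)
    ultimately show ?thesis by simp
  qed
  thus "y \<in> subdiff (fconj f) x" unfolding subdiff_def by blast
next
  fix y assume "y \<in> subdiff (fconj f) x"
  hence sd: "\<And>v. ereal (inner (v - x) y) + fconj f x \<le> fconj f v" unfolding subdiff_def by blast
  have G': "Gamma0 (fconj f)" by (rule Gamma0_fconj[OF G])
  obtain v1 m1 where m1: "fconj f v1 = ereal m1" using Gamma0_dom[OF G'] by blast
  have "fconj f x \<noteq> \<infinity>"
  proof
    assume "fconj f x = \<infinity>"
    thus False using sd[of v1] m1 by simp
  qed
  then obtain c where c: "fconj f x = ereal c" using Gamma0_finite_cases[OF G', of x] by blast
  have "fconj (fconj f) y \<le> ereal (inner x y - c)"
  proof (rule fconj_le)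
    fix v
    show "ereal (inner v y) - fconj f v \<le> ereal (inner x y - c)"
    proof (cases "fconj f v")
      case PInf thus ?thesis by simp
    next
      case MInf thus ?thesis using fconj_not_minf[OF G] by simp
    next
      case (real m)
      have "ereal (inner (v - x) y) + ereal c \<le> ereal m" using sd[of v] c real by simp
      hence "inner (v - x) y + c \<le> m" by simp
      thus ?thesis using real by (simp add: inner_diff_left)
    qed
  qed
  hence fy: "f y \<le> ereal (inner x y - c)" using fconj_fconj[OF G, of y] by simp
  have "f y \<noteq> \<infinity>" using fy by auto
  then obtain k where k: "f y = ereal k" using Gamma0_finite_cases[OF G, of y] by blast
  have "ereal (inner w x) - f w \<le> ereal (inner y x) - f y" for w
  proof -
    have "ereal (inner w x) - f w \<le> fconj f x" by (rule fconj_ge)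
    also have "\<dots> \<le> ereal (inner y x) - f y" using c k fy by (simp add: inner_commute)
    finally show ?thesis .
  qed
  thus "y \<in> {y. \<forall>w. ereal (inner w x) - f w \<le> ereal (inner y x) - f y}" by blast
qed

lemma hsq_diff: "hsq (x - y) = ereal (norm x ^ 2 / 2 - inner y x + norm y ^ 2 / 2)"
proof -
  have "norm (x - y)^2 = norm x^2 - 2 * inner y x + norm y^2"
    unfolding power2_norm_eq_inner by (simp add: inner_diff_left inner_diff_right inner_commute)
  thus ?thesis unfolding hsq_def by simp
qed

lemma hsq_finite: "hsq x = ereal (norm x ^ 2 / 2)" unfolding hsq_def by simp

lemma ereal_const_minus_le: "(ereal K - A \<le> ereal K - B) \<longleftrightarrow> (B \<le> A)"
  by (cases A; cases B) auto

lemma prox_rewrite: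
  fixes \<phi> :: "'a::real_inner \<Rightarrow> ereal"
  assumes nm: "\<forall>x. \<phi> x \<noteq> -\<infinity>"
  shows "Prox \<phi> x = {y. \<forall>w. ereal (inner w x) - (\<phi> w + hsq w) \<le> ereal (inner y x) - (\<phi> y + hsq y)}"
proof -
  have pt: "\<phi> y + hsq (x - y) = ereal (norm x ^ 2 / 2) - (ereal (inner y x) - (\<phi> y + hsq y))" for y
  proof (cases "\<phi> y")
    case (real a) thus ?thesis unfolding hsq_diff hsq_finite[of y] by simp
  next
    case PInf thus ?thesis unfolding hsq_diff hsq_finite[of y] by simp
  next
    case MInf thus ?thesis using nm by simp
  qed
  show ?thesis unfolding Prox_def pt ereal_const_minus_le ..
qed

lemma pointwise_cancel: "(g x - hsq x) + hsq x = (g x :: ereal)"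
  unfolding hsq_finite by (cases "g x") auto

theorem proposition1:
  fixes T :: "'a::{real_inner, complete_space} \<Rightarrow> 'a set"
  shows "((\<exists>\<psi>. Gamma0 \<psi> \<and> T = subdiff \<psi>) \<longleftrightarrow>
          (\<exists>\<phi>. (\<forall>x. \<phi> x \<noteq> -\<infinity>) \<and> Gamma0 (\<lambda>x. \<phi> x + hsq x) \<and> T = Prox \<phi>))
       \<and> (\<forall>\<psi>. Gamma0 \<psi> \<and> T = subdiff \<psi> \<longrightarrow>
            Gamma0 (\<lambda>x. (fconj \<psi> x - hsq x) + hsq x) \<and> T = Prox (\<lambda>x. fconj \<psi> x - hsq x))
       \<and> (\<forall>\<phi>. (\<forall>x. \<phi> x \<noteq> -\<infinity>) \<and> Gamma0 (\<lambda>x. \<phi> x + hsq x) \<and> T = Prox \<phi> \<longrightarrow>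
            Gamma0 (fconj (\<lambda>x. \<phi> x + hsq x)) \<and> T = subdiff (fconj (\<lambda>x. \<phi> x + hsq x)))"
proof -
  have part3: "Gamma0 (fconj (\<lambda>x. \<phi> x + hsq x)) \<and> T = subdiff (fconj (\<lambda>x. \<phi> x + hsq x))"
    if nm: "\<forall>x. \<phi> x \<noteq> -\<infinity>" and G: "Gamma0 (\<lambda>x. \<phi> x + hsq x)" and T: "T = Prox \<phi>" for \<phi>
  proof
    show "Gamma0 (fconj (\<lambda>x. \<phi> x + hsq x))" by (rule Gamma0_fconj[OF G])
    show "T = subdiff (fconj (\<lambda>x. \<phi> x + hsq x))"
    proof
      fix x
      show "T x = subdiff (fconj (\<lambda>x. \<phi> x + hsq x)) x"
        unfolding T prox_rewrite[OF nm] using argmax_subdiff[OF G, of x] by simp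
    qed
  qed
  have part2: "Gamma0 (\<lambda>x. (fconj \<psi> x - hsq x) + hsq x) \<and> T = Prox (\<lambda>x. fconj \<psi> x - hsq x)
      \<and> (\<forall>x. fconj \<psi> x - hsq x \<noteq> -\<infinity>)"
    if G: "Gamma0 \<psi>" and T: "T = subdiff \<psi>" for \<psi>
  proof (intro conjI)
    have eqg: "(\<lambda>x. (fconj \<psi> x - hsq x) + hsq x) = fconj \<psi>"
      by (rule ext, rule pointwise_cancel)
    have G': "Gamma0 (fconj \<psi>)" by (rule Gamma0_fconj[OF G])
    thus "Gamma0 (\<lambda>x. (fconj \<psi> x - hsq x) + hsq x)" unfolding eqg .
    show nm: "\<forall>x. fconj \<psi> x - hsq x \<noteq> -\<infinity>"
    proof
      fix x show "fconj \<psi> x - hsq x \<noteq> -\<infinity>"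
        using fconj_not_minf[OF G, of x] unfolding hsq_finite by (cases "fconj \<psi> x") auto
    qed
    show "T = Prox (\<lambda>x. fconj \<psi> x - hsq x)"
    proof
      fix x
      have "Prox (\<lambda>x. fconj \<psi> x - hsq x) x
          = {y. \<forall>w. ereal (inner w x) - fconj \<psi> w \<le> ereal (inner y x) - fconj \<psi> y}"
        unfolding prox_rewrite[OF nm] pointwise_cancel ..
      also have "\<dots> = subdiff (fconj (fconj \<psi>)) x" by (rule argmax_subdiff[OF G'])
      also have "fconj (fconj \<psi>) = \<psi>" by (rule ext, rule fconj_fconj[OF G])
      finally show "T x = Prox (\<lambda>x. fconj \<psi> x - hsq x) x" unfolding T ..
    qed
  qed
  show ?thesis
    apply (intro conjI)
    subgoal
    proof (rule iffI)
      assume "\<exists>\<psi>. Gamma0 \<psi> \<and> T = subdiff \<psi>"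
      then obtain \<psi> where "Gamma0 \<psi>" "T = subdiff \<psi>" by blast
      from part2[OF this] show "\<exists>\<phi>. (\<forall>x. \<phi> x \<noteq> -\<infinity>) \<and> Gamma0 (\<lambda>x. \<phi> x + hsq x) \<and> T = Prox \<phi>"
        by (intro exI[where x="\<lambda>x. fconj \<psi> x - hsq x"]) simp
    next
      assume "\<exists>\<phi>. (\<forall>x. \<phi> x \<noteq> -\<infinity>) \<and> Gamma0 (\<lambda>x. \<phi> x + hsq x) \<and> T = Prox \<phi>"
      then obtain \<phi> where "\<forall>x. \<phi> x \<noteq> -\<infinity>" "Gamma0 (\<lambda>x. \<phi> x + hsq x)" "T = Prox \<phi>" by blast
      from part3[OF this] show "\<exists>\<psi>. Gamma0 \<psi> \<and> T = subdiff \<psi>" by blast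
    qed
    subgoal using part2 by blast
    subgoal using part3 by blast
    done
qed

end
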